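(* Let $\mathcal{C}$ be a finite Coxeter group of rank $p$, realized as a group of real orthogonal $p\times p$ matrices acting on $V=\mathbb{R}^p$. Let $R$ and $\bar R$ be two elements of $\mathcal{C}$ (each a product of reflections $R_v$ in root vectors, or the identity), and consider the linearized covariant derivative $$D f=\Big[D_L+\delta^{nm}e^{\alpha\dot\alpha}(P_+)_{nm}{}^{kl}\,(y_{\alpha k}\hat{\bar\partial}_{\dot\alpha l}+\bar y_{\dot\alpha l}\hat\partial_{\alpha k})-i\,\delta^{nm}e^{\alpha\dot\alpha}(P_-)_{nm}{}^{kl}\,(y_{\alpha k}\bar y_{\dot\alpha l}-\hat\partial_{\alpha k}\hat{\bar\partial}_{\dot\alpha l})\Big]f,$$ with $P_\pm^{kl}=\tfrac12\delta^{nm}\big(\mathbb{1}^k_n\bar{\mathbb{1}}^l_m\pm R^k{}_n\bar R^l{}_m\big)$, acting on functions $f(y_1,\dots,y_p,\bar y_1,\dots,\bar y_p|x)$. Then the corresponding module is disentangled (i.e. isomorphic to a tensor product of standard adjoint and twisted-adjoint modules of the standard $4d$ higher-spin theory) if and only if $(R\bar R^{T})^2=\mathbb{1}$.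
   Context: Variables: for each $n\in\{1,\dots,p\}$ there are commuting two-component spinor variables $y^\alpha_n$ ($\alpha=1,2$) and $\bar y^{\dot\alpha}_n$ ($\dot\alpha=1,2$), with real-conjugate pairing $y^\dagger=\bar y$; $\partial_{\alpha n}=\partial/\partial y^\alpha_n$, $\bar\partial_{\dot\alpha n}=\partial/\partial\bar y^{\dot\alpha}_n$ (hats denote dressing by idempotents and may be ignored here). $e^{\alpha\dot\alpha}$ is the $AdS_4$ vierbein one-form and $D_L=d_x+\delta^{nm}(\omega^{\alpha\beta}y_{\alpha n}\partial_{\beta m}+\bar\omega^{\dot\alpha\dot\beta}\bar y_{\dot\alpha n}\bar\partial_{\dot\beta m})$ is the Lorentz covariant derivative built from the $AdS_4$ spin connection. The standard adjoint module of the $4d$ higher-spin theory (for a single pair $y,\bar y$) is defined by the operator $D_L+e^{\alpha\dot\alpha}(y_\alpha\bar\partial_{\dot\alpha}+\bar y_{\dot\alpha}\partial_\alpha)$, and the standard twisted-adjoint module by $D_L-ie^{\alpha\dot\alpha}(y_\alpha\bar y_{\dot\alpha}-\partial_\alpha\bar\partial_{\dot\alpha})$. A module defined by $D$ is called disentangled if, after a real (orthogonal) linear change of the Coxeter labels $n$ of the variables $y_n,\bar y_n$, the operator $D$ becomes a sum over the new labels of standard adjoint or twisted-adjoint operators each acting on one pair of variables, i.e. the module is isomorphic to a tensor product of standard adjoint and twisted-adjoint modules; otherwise it is called entangled. *)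

theory Defs
  imports "HOL-Analysis.Analysis"
begin

text \<open>Matrices are indexed by the Coxeter labels, a finite type 'n with CARD('n) = p.\<close>

definition reflection_matrix :: "real^'n \<Rightarrow> real^'n^'n" where
  "reflection_matrix v = (\<chi> i j. (if i = j then 1 else 0) - 2 * v$i * v$j / (v \<bullet> v))"

definition generated_by :: "(real^'n^'n) set \<Rightarrow> (real^'n^'n) set" where
  "generated_by S = {foldr (**) xs (mat 1) | xs. set xs \<subseteq> S}"

definition finite_coxeter_group :: "(real^'n^'n) set \<Rightarrow> bool" where
  "finite_coxeter_group C \<longleftrightarrow>
     (\<exists>S. finite S \<and> S \<subseteq> {reflection_matrix v | v. v \<noteq> 0} \<and> C = generated_by S) \<and> finite C"

definition P_plus :: "real^'n^'n \<Rightarrow> real^'n^'n \<Rightarrow> real^'n^'n" where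
  "P_plus R Rb = (\<chi> k l. (1/2) * (\<Sum>n\<in>UNIV. (if k = n then 1 else 0) * (if l = n then 1 else 0)
                                       + R$k$n * Rb$l$n))"

definition P_minus :: "real^'n^'n \<Rightarrow> real^'n^'n \<Rightarrow> real^'n^'n" where
  "P_minus R Rb = (\<chi> k l. (1/2) * (\<Sum>n\<in>UNIV. (if k = n then 1 else 0) * (if l = n then 1 else 0)
                                       - R$k$n * Rb$l$n))"

text \<open>An operator of the form
  D = D_L + e^{a a'} A^{kl} (y_{a k} dbar_{a' l} + ybar_{a' l} d_{a k})
          - i e^{a a'} B^{kl} (y_{a k} ybar_{a' l} - d_{a k} dbar_{a' l})
  is determined (D_L being fixed and O(p)-invariant) by its coefficient matrices (A, B).
  Under a real orthogonal relabeling y_n = O_n^{n'} y'_{n'} (same for ybar) the coefficients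
  transform as A' = O^T A O, B' = O^T B O.\<close>
definition relabel :: "real^'n^'n \<Rightarrow> real^'n^'n \<Rightarrow> real^'n^'n" where
  "relabel Q A = transpose Q ** A ** Q"

text \<open>Disentangled: after some orthogonal relabeling, the operator is a sum over labels of
  standard adjoint operators (A'_{kk} = 1, B'_{kk} = 0) or standard twisted-adjoint
  operators (A'_{kk} = 0, B'_{kk} = 1), each acting on one pair y_k, ybar_k.\<close>
definition disentangled :: "real^'n^'n \<Rightarrow> real^'n^'n \<Rightarrow> bool" where
  "disentangled A B \<longleftrightarrow>
     (\<exists>Q (adj :: 'n \<Rightarrow> bool). orthogonal_matrix Q \<and>
        relabel Q A = (\<chi> k l. if k = l \<and> adj k then 1 else 0) \<and>
        relabel Q B = (\<chi> k l. if k = l \<and> \<not> adj k then 1 else 0))"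

end

theory Submission
  imports Defs
begin


lemma msub_l: "(A::real^'n^'n) ** (B - C) = A ** B - A ** C"
  by (simp add: vec_eq_iff matrix_matrix_mult_def sum_subtractf algebra_simps)
lemma msub_r: "((B::real^'n^'n) - C) ** A = B ** A - C ** A"
  by (simp add: vec_eq_iff matrix_matrix_mult_def sum_subtractf algebra_simps)
lemma madd_r: "((B::real^'n^'n) + C) ** A = B ** A + C ** A"
  by (simp add: vec_eq_iff matrix_matrix_mult_def sum.distrib algebra_simps)
lemma mscale_l: "(A::real^'n^'n) ** (c *\<^sub>R B) = c *\<^sub>R (A ** B)"
  by (simp add: vec_eq_iff matrix_matrix_mult_def sum_distrib_left algebra_simps)
lemma mscale_r: "(c *\<^sub>R (A::real^'n^'n)) ** B = c *\<^sub>R (A ** B)"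
  by (simp add: vec_eq_iff matrix_matrix_mult_def sum_distrib_left algebra_simps)

lemma dd: fixes k l :: "'n::finite" shows "(\<Sum>n\<in>UNIV. (if k = n then 1 else 0) * (if l = n then 1 else 0) :: real) = (if k = l then 1 else 0)"
proof -
  have "(\<Sum>n\<in>UNIV. (if k = n then 1 else 0) * (if l = n then 1 else 0) :: real) = (\<Sum>n\<in>UNIV. if n = k then (if k = l then 1 else 0) else 0)"
    by (rule sum.cong) auto
  also have "\<dots> = (if k = l then 1 else 0)" by (rule trans[OF sum.delta]) simp_all
  finally show ?thesis .
qed

lemma Pp: "P_plus R Rb = (1/2) *\<^sub>R (mat 1 + R ** transpose Rb)"
  by (simp add: P_plus_def vec_eq_iff matrix_matrix_mult_def transpose_def mat_def sum.distrib dd)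
lemma Pm: "P_minus R Rb = (1/2) *\<^sub>R (mat 1 - R ** transpose Rb)"
  by (simp add: P_minus_def vec_eq_iff matrix_matrix_mult_def transpose_def mat_def sum_subtractf dd)


lemma refl_orth:
  fixes v :: "real^'n" assumes "v \<noteq> 0"
  shows "orthogonal_matrix (reflection_matrix v)"
proof -
  define s where "s = v \<bullet> v"
  define Ov where "Ov = ((\<chi> i j. v$i * v$j) :: real^'n^'n)"
  define c where "c = 2 / s"
  have s: "s \<noteq> 0" using assms by (simp add: s_def)
  have H: "reflection_matrix v = mat 1 - c *\<^sub>R Ov"
    by (simp add: reflection_matrix_def vec_eq_iff Ov_def c_def s_def mat_def)
  have OvT: "transpose Ov = Ov" by (simp add: Ov_def transpose_def vec_eq_iff mult.commute)
  have OvOv: "Ov ** Ov = s *\<^sub>R Ov"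
  proof -
    have "\<And>i k. (\<Sum>j\<in>UNIV. v$i * v$j * (v$j * v$k)) = s * (v$i * v$k)"
      by (simp add: s_def inner_vec_def sum_distrib_left sum_distrib_right algebra_simps)
    then show ?thesis by (simp add: Ov_def vec_eq_iff matrix_matrix_mult_def)
  qed
  have HT: "transpose (reflection_matrix v) = reflection_matrix v"
    by (simp add: reflection_matrix_def transpose_def vec_eq_iff mult.commute)
  have cc: "c * c * s = 2 * c" using s by (simp add: c_def field_simps)
  have "transpose (reflection_matrix v) ** reflection_matrix v
      = mat 1 - (2 * c) *\<^sub>R Ov + (c * c * s) *\<^sub>R Ov"
    unfolding HT by (simp add: H msub_l msub_r mscale_l mscale_r OvOv algebra_simps scaleR_diff_right; simp add: vec_eq_iff)
  also have "\<dots> = mat 1" by (simp add: cc)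
  finally show ?thesis by (simp add: orthogonal_matrix)
qed



lemma diag:
  fixes M :: "real^'n^'n"
  assumes MT: "transpose M = M" and MM: "M ** M = mat 1"
  obtains Q and adj :: "'n \<Rightarrow> bool" where "orthogonal_matrix Q"
    "transpose Q ** M ** Q = (\<chi> k l. if k = l then (if adj k then 1 else -1) else 0)"
proof -
  define U where "U = {x. M *v x = x}"
  define W where "W = {x. M *v x = - x}"
  have sU: "subspace U"
    by (auto simp: subspace_def U_def matrix_vector_right_distrib matrix_vector_mult_scaleR)
  have sW: "subspace W"
    by (auto simp: subspace_def W_def matrix_vector_right_distrib matrix_vector_mult_scaleR)
  have sym: "(M *v x) \<bullet> y = x \<bullet> (M *v y)" for x y
  proof -
    have "M *v x = x v* M" using MT by (metis transpose_matrix_vector)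
    then show ?thesis by (simp add: dot_lmul_matrix)
  qed
  have orthUW: "x \<bullet> y = 0" if "x \<in> U" "y \<in> W" for x y
  proof -
    have "x \<bullet> y = (M *v x) \<bullet> y" using that by (simp add: U_def)
    also have "\<dots> = x \<bullet> (M *v y)" by (rule sym)
    also have "\<dots> = - (x \<bullet> y)" using that by (simp add: W_def)
    finally show ?thesis by simp
  qed
  obtain BU where BU: "BU \<subseteq> U" "pairwise orthogonal BU" "\<And>x. x \<in> BU \<Longrightarrow> norm x = 1" "span BU = U"
    using orthonormal_basis_subspace[OF sU] by metis
  obtain BW where BW: "BW \<subseteq> W" "pairwise orthogonal BW" "\<And>x. x \<in> BW \<Longrightarrow> norm x = 1" "span BW = W"
    using orthonormal_basis_subspace[OF sW] by metis
  define B where "B = BU \<union> BW"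
  have nB: "\<And>x. x \<in> B \<Longrightarrow> norm x = 1" using BU BW by (auto simp: B_def)
  have pB: "pairwise orthogonal B"
    using BU BW orthUW unfolding B_def pairwise_def orthogonal_def
    by (auto, (metis inner_commute subsetD)+)
  have iB: "independent B"
    by (rule pairwise_orthogonal_independent[OF pB]) (use nB in force)
  have spB: "span B = UNIV"
  proof -
    have "x \<in> span B" for x
    proof -
      have MMx: "M *v (M *v x) = x" by (simp add: matrix_vector_mul_assoc MM)
      have a: "(1/2) *\<^sub>R (x + M *v x) \<in> U"
        by (simp add: U_def matrix_vector_right_distrib matrix_vector_mult_scaleR MMx add.commute)
      have b: "(1/2) *\<^sub>R (x - M *v x) \<in> W"
        by (simp add: W_def matrix_vector_mult_diff_distrib matrix_vector_mult_scaleR MMx algebra_simps scaleR_diff_right)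
      have "(1/2) *\<^sub>R (x + M *v x) \<in> span B" using a BU span_mono[of BU B] by (auto simp: B_def)
      moreover have "(1/2) *\<^sub>R (x - M *v x) \<in> span B" using b BW span_mono[of BW B] by (auto simp: B_def)
      ultimately have "(1/2) *\<^sub>R (x + M *v x) + (1/2) *\<^sub>R (x - M *v x) \<in> span B"
        by (rule span_add)
      moreover have "(1/2) *\<^sub>R (x + M *v x) + (1/2) *\<^sub>R (x - M *v x) = x"
        by (simp add: algebra_simps scaleR_diff_right) (simp add: vec_eq_iff)
      ultimately show ?thesis by simp
    qed
    then show ?thesis by auto
  qed
  have cB: "card B = CARD('n)"
    using basis_card_eq_dim[of B UNIV] iB spB by simp
  have fB: "finite B" using iB by (metis finiteI_independent)
  obtain f where f: "bij_betw f (UNIV::'n set) B"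
    using fB cB by (metis finite_class.finite_UNIV finite_same_card_bij)
  have fB': "f i \<in> B" for i using f by (auto simp: bij_betw_def)
  have [simp]: "norm (f i) = 1" for i using nB fB' by blast
  have orthf: "i \<noteq> j \<Longrightarrow> orthogonal (f i) (f j)" for i j
    using pB f by (auto simp: pairwise_def bij_betw_def inj_on_def fB')
  define Q where "Q = (\<chi> i j. f j $ i)"
  have oQ: "orthogonal_matrix Q"
    by (simp add: Q_def orthogonal_matrix_orthonormal_columns column_def orthf)
  define adj where "adj k = (f k \<in> BU)" for k
  have Mf: "M *v f k = (if adj k then 1 else -1) *\<^sub>R f k" for k
  proof (cases "adj k")
    case True then have "f k \<in> U" using BU by (auto simp: adj_def)
    then show ?thesis using True by (simp add: U_def)
  next
    case False then have "f k \<in> BW" using fB'[of k] by (auto simp: adj_def B_def)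
    then have "f k \<in> W" using BW by auto
    then show ?thesis using False by (simp add: W_def)
  qed
  have ff: "f j \<bullet> f k = (if j = k then 1 else 0)" for j k
    using orthf[of j k] by (auto simp: orthogonal_def norm_eq_1[symmetric])
  have MQ: "M ** Q = (\<chi> i k. (if adj k then 1 else -1) * f k $ i)"
  proof -
    have "(M *v f k) $ i = (\<Sum>b\<in>UNIV. M $ i $ b * f k $ b)" for i k
      by (simp add: matrix_vector_mult_def)
    then show ?thesis using Mf by (simp add: vec_eq_iff matrix_matrix_mult_def Q_def)
  qed
  have "transpose Q ** M ** Q = (\<chi> k l. if k = l then (if adj k then 1 else -1) else 0)"
  proof -
    have "(\<Sum>i\<in>UNIV. f j $ i * ((if adj k then 1 else -1) * f k $ i)) = (if adj k then 1 else -1) * (f j \<bullet> f k)" for j k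
      by (simp add: inner_vec_def sum_distrib_left algebra_simps)
    then show ?thesis
      unfolding matrix_mul_assoc[symmetric] MQ by (simp add: vec_eq_iff matrix_matrix_mult_def Q_def transpose_def ff)
  qed
  with oQ that show ?thesis by blast
qed


lemma C_orth:
  assumes "finite_coxeter_group C" "R \<in> C"
  shows "orthogonal_matrix R"
proof -
  obtain S where S: "S \<subseteq> {reflection_matrix v | v. v \<noteq> 0}" "C = generated_by S"
    using assms(1) unfolding finite_coxeter_group_def by (elim conjE exE) (rule that, assumption+)
  have "R \<in> {foldr (**) xs (mat 1) | xs. set xs \<subseteq> S}"
    using assms(2) S(2) unfolding generated_by_def by simp
  then obtain xs where xs: "R = foldr (**) xs (mat 1)" "set xs \<subseteq> S"
    by (rule CollectE) (elim exE conjE, rule that)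
  have "set xs \<subseteq> S \<Longrightarrow> orthogonal_matrix (foldr (**) xs (mat 1))" for xs
  proof (induction xs)
    case Nil then show ?case by (simp add: orthogonal_matrix_id)
  next
    case (Cons a xs)
    then have "a \<in> S" by simp
    with S(1) have "a \<in> {reflection_matrix v | v. v \<noteq> 0}" by (rule subsetD)
    then obtain v where "v \<noteq> 0" "a = reflection_matrix v" by auto
    then have "orthogonal_matrix a" using refl_orth by blast
    with Cons show ?case by (simp add: orthogonal_matrix_mul)
  qed
  with xs show ?thesis by simp
qed

lemma relabel_P:
  assumes "orthogonal_matrix Q"
  shows "relabel Q ((1/2) *\<^sub>R (mat 1 + M)) = (1/2) *\<^sub>R (mat 1 + transpose Q ** M ** Q)"
    and "relabel Q ((1/2) *\<^sub>R (mat 1 - M)) = (1/2) *\<^sub>R (mat 1 - transpose Q ** M ** Q)"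
proof -
  have I: "transpose Q ** Q = mat 1" using assms by (simp add: orthogonal_matrix)
  show "relabel Q ((1/2) *\<^sub>R (mat 1 + M)) = (1/2) *\<^sub>R (mat 1 + transpose Q ** M ** Q)"
    unfolding relabel_def mscale_l mscale_r matrix_add_ldistrib madd_r matrix_mul_rid I ..
  show "relabel Q ((1/2) *\<^sub>R (mat 1 - M)) = (1/2) *\<^sub>R (mat 1 - transpose Q ** M ** Q)"
    unfolding relabel_def mscale_l mscale_r msub_l msub_r matrix_mul_rid I ..
qed

theorem mainTheorem1:
  fixes C :: "(real^'n^'n) set" and R Rb :: "real^'n^'n"
  assumes "finite_coxeter_group C" and "R \<in> C" and "Rb \<in> C"
  shows "disentangled (P_plus R Rb) (P_minus R Rb) \<longleftrightarrow>
         (R ** transpose Rb) ** (R ** transpose Rb) = mat 1"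
proof -
  define M where "M = R ** transpose Rb"
  have oM: "orthogonal_matrix M"
    unfolding M_def using C_orth[OF assms(1,2)] C_orth[OF assms(1,3)]
    by (simp add: orthogonal_matrix_mul)
  have "disentangled (P_plus R Rb) (P_minus R Rb) \<longleftrightarrow> M ** M = mat 1"
  proof
    assume "disentangled (P_plus R Rb) (P_minus R Rb)"
    then obtain Q and adj :: "'n \<Rightarrow> bool" where oQ: "orthogonal_matrix Q"
      and e1: "relabel Q (P_plus R Rb) = (\<chi> k l. if k = l \<and> adj k then 1 else 0)"
      by (auto simp: disentangled_def)
    define D where "D = transpose Q ** M ** Q"
    have e1': "(1/2) *\<^sub>R (mat 1 + D) = (\<chi> k l. if k = l \<and> adj k then 1 else 0)"
      using e1 relabel_P(1)[OF oQ, of M] by (simp add: Pp M_def D_def)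
    have "D $ k $ l = (if k = l then (if adj k then 1 else -1) else 0)" for k l
    proof -
      have "(1/2) * ((mat 1 :: real^'n^'n) $ k $ l + D $ k $ l) = (if k = l \<and> adj k then 1 else 0)"
        using arg_cong[OF e1', of "\<lambda>X. X $ k $ l"] by simp
      then show ?thesis by (auto simp: mat_def split: if_splits)
    qed
    then have Dsg: "D = (\<chi> k l. if k = l then sg k else 0)"
      if "sg = (\<lambda>k. if adj k then 1 else -1 :: real)" for sg
      using that by (simp add: vec_eq_iff)
    define sg where "sg = (\<lambda>k. if adj k then 1 else -1 :: real)"
    have sg2: "sg k * sg k = 1" for k by (simp add: sg_def)
    have DD: "D ** D = mat 1"
    proof -
      have "(\<Sum>j\<in>UNIV. (if k = j then sg k else 0) * (if j = l then sg j else 0)) = (if k = l then 1 else 0)" for k l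
      proof -
        have "(\<Sum>j\<in>UNIV. (if k = j then sg k else 0) * (if j = l then sg j else 0))
            = (\<Sum>j\<in>UNIV. if j = k then sg k * (if j = l then sg j else 0) else 0)"
          by (rule sum.cong) auto
        also have "\<dots> = (if k = l then 1 else 0)" by (simp add: sg2)
        finally show ?thesis .
      qed
      then show ?thesis unfolding Dsg[OF sg_def]
        by (simp add: vec_eq_iff matrix_matrix_mult_def mat_def)
    qed
    have QQ: "Q ** transpose Q = mat 1" using oQ by (simp add: orthogonal_matrix_def)
    have "Q ** D ** transpose Q = (Q ** transpose Q) ** M ** (Q ** transpose Q)"
      by (simp add: D_def matrix_mul_assoc)
    then have MD: "M = Q ** D ** transpose Q" by (simp add: QQ)
    have "M ** M = Q ** (D ** (transpose Q ** Q) ** D) ** transpose Q"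
      unfolding MD by (simp add: matrix_mul_assoc)
    also have "\<dots> = mat 1" using oQ by (simp add: orthogonal_matrix DD QQ)
    finally show "M ** M = mat 1" .
  next
    assume MM: "M ** M = mat 1"
    have TM: "transpose M ** M = mat 1" using oM by (simp add: orthogonal_matrix)
    have MT: "transpose M = M"
    proof -
      have "transpose M = transpose M ** (M ** M)" by (simp add: MM)
      also have "\<dots> = (transpose M ** M) ** M" by (simp add: matrix_mul_assoc)
      also have "\<dots> = M" by (simp add: TM)
      finally show ?thesis .
    qed
    obtain Q and adj :: "'n \<Rightarrow> bool" where oQ: "orthogonal_matrix Q"
      and D: "transpose Q ** M ** Q = (\<chi> k l. if k = l then (if adj k then 1 else -1) else 0)"
      using diag[OF MT MM] by blast
    show "disentangled (P_plus R Rb) (P_minus R Rb)"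
      unfolding disentangled_def
    proof (intro exI conjI)
      show "orthogonal_matrix Q" by (rule oQ)
      show "relabel Q (P_plus R Rb) = (\<chi> k l. if k = l \<and> adj k then 1 else 0)"
        unfolding Pp M_def[symmetric] relabel_P(1)[OF oQ] D
        by (simp add: vec_eq_iff mat_def)
      show "relabel Q (P_minus R Rb) = (\<chi> k l. if k = l \<and> \<not> adj k then 1 else 0)"
        unfolding Pm M_def[symmetric] relabel_P(2)[OF oQ] D
        by (simp add: vec_eq_iff mat_def)
    qed
  qed
  then show ?thesis by (simp add: M_def)
qed

end
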